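(* Let $n$ be even and $F\colon\mathbb F_2^n\to\mathbb F_2^n$ a quadratic APN function. Let $2^{\frac{n+d_1}{2}}$ be the smallest non-bent amplitude of $F$, $2^{\frac{n+d_2}{2}}$ the second smallest non-bent amplitude of $F$, and $k$ the number of component functions with amplitude $2^{\frac{n+d_1}{2}}$. Then: (i) if $2^{d_2-d_1}\nmid k$ and $d_2<2d_1$, then $k\ge 2^{d_1}+1$; (ii) if $2^{d_2-d_1}\nmid k$ and $d_2\ge2d_1$, then either $d_1\mid d_2$ and $k=\frac{2^{d_2}-1}{2^{d_1}-1}$, or $k>2\cdot2^{d_2-d_1}$; (iii) if $2^{d_2-d_1}\mid k$ and $d_2\le 2d_1$, then $k\ge 2^{d_2}-2^{d_1}+2^{d_2-d_1}$; (iv) if $2^{d_2-d_1}\mid k$ and $d_2\ge 2d_1$, then $k\ge 2^{d_2}$.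
   Context: $\langle\cdot,\cdot\rangle$ is the standard dot product. $F$ is APN if for every $a\ne0$ and $c$, $F(x)+F(x+a)=c$ has at most 2 solutions; quadratic if each component $F_b(x)=\langle b,F(x)\rangle$ is a quadratic form plus an affine function. For quadratic $F$ and fixed $b$ there is $k'$ with $|W_F(b,a)|\in\{0,2^{(n+k')/2}\}$ for all $a$, where $W_F(b,a)=\sum_x(-1)^{F_b(x)+\langle x,a\rangle}$; $2^{(n+k')/2}$ is the amplitude of $F_b$. A component is bent if its amplitude is $2^{n/2}$; "non-bent amplitudes" refer to amplitudes of non-trivial ($b\neq0$) non-bent components. *)

theory Defs
  imports Complex_Main
begin

text \<open>Vectors of F_2^n are modelled as functions nat => bool vanishing outside {0..<n}.\<close>

definition vecs :: "nat \<Rightarrow> (nat \<Rightarrow> bool) set" where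
  "vecs n = {x. \<forall>i. n \<le> i \<longrightarrow> \<not> x i}"

definition vadd :: "(nat \<Rightarrow> bool) \<Rightarrow> (nat \<Rightarrow> bool) \<Rightarrow> (nat \<Rightarrow> bool)" where
  "vadd x y = (\<lambda>i. x i \<noteq> y i)"

definition vzero :: "nat \<Rightarrow> bool" where
  "vzero = (\<lambda>_. False)"

text \<open>Standard dot product over F_2 (value True means 1).\<close>
definition dotp :: "nat \<Rightarrow> (nat \<Rightarrow> bool) \<Rightarrow> (nat \<Rightarrow> bool) \<Rightarrow> bool" where
  "dotp n a x = odd (card {i. i < n \<and> a i \<and> x i})"

definition qform :: "nat \<Rightarrow> (nat \<Rightarrow> nat \<Rightarrow> bool) \<Rightarrow> (nat \<Rightarrow> bool) \<Rightarrow> bool" where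
  "qform n Q x = odd (card {(i, j). i < j \<and> j < n \<and> Q i j \<and> x i \<and> x j})"

definition component :: "nat \<Rightarrow> ((nat \<Rightarrow> bool) \<Rightarrow> (nat \<Rightarrow> bool)) \<Rightarrow> (nat \<Rightarrow> bool) \<Rightarrow> (nat \<Rightarrow> bool) \<Rightarrow> bool" where
  "component n F b x = dotp n b (F x)"

definition is_APN :: "nat \<Rightarrow> ((nat \<Rightarrow> bool) \<Rightarrow> (nat \<Rightarrow> bool)) \<Rightarrow> bool" where
  "is_APN n F \<longleftrightarrow> (\<forall>a \<in> vecs n. a \<noteq> vzero \<longrightarrow>
      (\<forall>c \<in> vecs n. card {x \<in> vecs n. vadd (F x) (F (vadd x a)) = c} \<le> 2))"

definition is_quadratic :: "nat \<Rightarrow> ((nat \<Rightarrow> bool) \<Rightarrow> (nat \<Rightarrow> bool)) \<Rightarrow> bool" where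
  "is_quadratic n F \<longleftrightarrow> (\<forall>b \<in> vecs n. \<exists>Q l c. \<forall>x \<in> vecs n.
      component n F b x = (c \<noteq> (dotp n l x \<noteq> qform n Q x)))"

definition walsh :: "nat \<Rightarrow> ((nat \<Rightarrow> bool) \<Rightarrow> (nat \<Rightarrow> bool)) \<Rightarrow> (nat \<Rightarrow> bool) \<Rightarrow> (nat \<Rightarrow> bool) \<Rightarrow> int" where
  "walsh n F b a = (\<Sum>x \<in> vecs n. if component n F b x \<noteq> dotp n x a then -1 else 1)"

text \<open>Amplitude of F_b: the common nonzero value of |W_F(b,a)|, i.e. its maximum over a.\<close>
definition amplitude :: "nat \<Rightarrow> ((nat \<Rightarrow> bool) \<Rightarrow> (nat \<Rightarrow> bool)) \<Rightarrow> (nat \<Rightarrow> bool) \<Rightarrow> real" where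
  "amplitude n F b = real_of_int (Max {\<bar>walsh n F b a\<bar> | a. a \<in> vecs n})"

definition nonbent_amplitudes :: "nat \<Rightarrow> ((nat \<Rightarrow> bool) \<Rightarrow> (nat \<Rightarrow> bool)) \<Rightarrow> real set" where
  "nonbent_amplitudes n F = {amplitude n F b | b. b \<in> vecs n \<and> b \<noteq> vzero
      \<and> amplitude n F b \<noteq> 2 powr (real n / 2)}"

end

theory Submission
  imports Defs "HOL-Computational_Algebra.Primes"
begin


definition sg :: "bool \<Rightarrow> int" where "sg P = (if P then -1 else 1)"

lemma sg_mult: "sg P * sg Q = sg (P \<noteq> Q)" by (simp add: sg_def)
lemma sg_not: "sg (\<not> P) = - sg P" by (simp add: sg_def)

lemma vadd_comm: "vadd x y = vadd y x" unfolding vadd_def by auto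
lemma vadd_assoc: "vadd (vadd x y) z = vadd x (vadd y z)" unfolding vadd_def by auto
lemma vadd_zero[simp]: "vadd x vzero = x" "vadd vzero x = x" unfolding vadd_def vzero_def by auto
lemma vadd_self[simp]: "vadd x x = vzero" unfolding vadd_def vzero_def by auto
lemma vadd_cancel[simp]: "vadd (vadd x y) y = x" unfolding vadd_def by auto
lemma vadd_eq_zero: "vadd x y = vzero \<longleftrightarrow> x = y" unfolding vadd_def vzero_def by (auto simp: fun_eq_iff)
lemma vecs_vadd[simp]: "x \<in> vecs n \<Longrightarrow> y \<in> vecs n \<Longrightarrow> vadd x y \<in> vecs n"
  unfolding vecs_def vadd_def by auto
lemma vecs_zero[simp]: "vzero \<in> vecs n" unfolding vecs_def vzero_def by auto

lemma card_vecs: "card (vecs n) = 2 ^ n" and finite_vecs[simp]: "finite (vecs n)"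
proof -
  have b: "bij_betw (\<lambda>x. {i. x i}) (vecs n) (Pow {..<n})"
    unfolding bij_betw_def inj_on_def vecs_def
  proof (intro conjI ballI impI)
    show "(\<lambda>x. {i. x i}) ` {x. \<forall>i. n \<le> i \<longrightarrow> \<not> x i} = Pow {..<n}"
    proof
      show "(\<lambda>x. {i. x i}) ` {x. \<forall>i. n \<le> i \<longrightarrow> \<not> x i} \<subseteq> Pow {..<n}"
        using not_le by auto
      show "Pow {..<n} \<subseteq> (\<lambda>x. {i. x i}) ` {x. \<forall>i. n \<le> i \<longrightarrow> \<not> x i}"
      proof
        fix S assume "S \<in> Pow {..<n}"
        then show "S \<in> (\<lambda>x. {i. x i}) ` {x. \<forall>i. n \<le> i \<longrightarrow> \<not> x i}"
          by (intro image_eqI[of _ _ "\<lambda>i. i \<in> S"]) auto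
      qed
    qed
  qed (auto simp: fun_eq_iff)
  then show "card (vecs n) = 2 ^ n" using bij_betw_same_card card_Pow by fastforce
  show "finite (vecs n)" using b bij_betw_finite by blast
qed

lemma card_odd_sum: "finite S \<Longrightarrow> card {p \<in> S. P p} = (\<Sum>p\<in>S. of_bool (P p) :: nat)"
  by (simp add: Int_def conj_commute)

lemma dotp_sum: "dotp n a x = odd (\<Sum>i<n. of_bool (a i \<and> x i) :: nat)"
proof -
  have "{i. i < n \<and> a i \<and> x i} = {i \<in> {..<n}. a i \<and> x i}" by auto
  then show ?thesis unfolding dotp_def by (simp only: card_odd_sum[OF finite_lessThan])
qed

lemma dotp_comm: "dotp n a x = dotp n x a" unfolding dotp_def by (simp add: conj_commute)

lemma dotp_add2: "dotp n a (vadd x y) = (dotp n a x \<noteq> dotp n a y)"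
proof -
  have "(\<Sum>i<n. of_bool (a i \<and> x i) :: nat) + (\<Sum>i<n. of_bool (a i \<and> y i))
      = (\<Sum>i<n. of_bool (a i \<and> (x i \<noteq> y i))) + 2 * (\<Sum>i<n. of_bool (a i \<and> x i \<and> y i))"
    (is "?L = ?R")
  proof -
    have "?L = (\<Sum>i<n. of_bool (a i \<and> x i) + of_bool (a i \<and> y i))" by (simp only: sum.distrib)
    also have "\<dots> = (\<Sum>i<n. of_bool (a i \<and> (x i \<noteq> y i)) + 2 * of_bool (a i \<and> x i \<and> y i))"
      by (rule sum.cong) auto
    also have "\<dots> = ?R" by (simp only: sum.distrib sum_distrib_left)
    finally show ?thesis .
  qed
  then have "odd ((\<Sum>i<n. of_bool (a i \<and> x i) :: nat) + (\<Sum>i<n. of_bool (a i \<and> y i)))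
     = odd (\<Sum>i<n. of_bool (a i \<and> (x i \<noteq> y i)) :: nat)" by simp
  then show ?thesis unfolding dotp_sum vadd_def by simp
qed

lemma dotp_add1: "dotp n (vadd x y) a = (dotp n x a \<noteq> dotp n y a)"
  using dotp_add2 dotp_comm by metis

lemma dotp_zero[simp]: "dotp n a vzero = False" "dotp n vzero a = False"
  unfolding dotp_def vzero_def by auto

definition ei :: "nat \<Rightarrow> nat \<Rightarrow> bool" where "ei i = (\<lambda>j. j = i)"
lemma ei_vecs: "i < n \<Longrightarrow> ei i \<in> vecs n" unfolding ei_def vecs_def by auto
lemma dotp_ei: "i < n \<Longrightarrow> dotp n (ei i) x = x i"
proof -
  assume "i < n"
  then have "{j. j < n \<and> ei i j \<and> x j} = (if x i then {i} else {})" unfolding ei_def by auto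
  then show ?thesis unfolding dotp_def by simp
qed

definition subgrp :: "nat \<Rightarrow> (nat \<Rightarrow> bool) set \<Rightarrow> bool" where
  "subgrp n S \<longleftrightarrow> S \<subseteq> vecs n \<and> vzero \<in> S \<and> (\<forall>x\<in>S. \<forall>y\<in>S. vadd x y \<in> S)"

lemma sg_sum:
  assumes "finite S" "\<forall>x\<in>S. \<forall>y\<in>S. vadd x y \<in> S"
    "\<forall>x\<in>S. \<forall>y\<in>S. h (vadd x y) = (h x \<noteq> h y)"
  shows "(\<Sum>x\<in>S. sg (h x)) = (if \<forall>x\<in>S. \<not> h x then int (card S) else 0)"
proof (cases "\<forall>x\<in>S. \<not> h x")
  case True
  then show ?thesis by (simp add: sg_def)
next
  case False
  then obtain s where s: "s \<in> S" "h s" by auto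
  have bij: "bij_betw (\<lambda>x. vadd x s) S S"
    by (rule bij_betw_byWitness[where f'="\<lambda>x. vadd x s"]) (use assms s in auto)
  have "(\<Sum>x\<in>S. sg (h x)) = (\<Sum>x\<in>S. sg (h (vadd x s)))"
    using sum.reindex_bij_betw[OF bij, of "\<lambda>x. sg (h x)"] by simp
  also have "\<dots> = (\<Sum>x\<in>S. - sg (h x))"
    using assms s by (intro sum.cong) (auto simp: sg_def)
  finally have "(\<Sum>x\<in>S. sg (h x)) = 0" by (simp add: sum_negf)
  then show ?thesis using False by presburger
qed

lemma subgrp_sum:
  assumes "subgrp n S" "\<forall>x\<in>S. \<forall>y\<in>S. h (vadd x y) = (h x \<noteq> h y)"
  shows "(\<Sum>x\<in>S. sg (h x)) = (if \<forall>x\<in>S. \<not> h x then int (card S) else 0)"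
  using assms sg_sum[of S h] finite_subset[OF _ finite_vecs] unfolding subgrp_def by blast

lemma subgrp_vecs: "subgrp n (vecs n)" unfolding subgrp_def by auto

lemma char_sum: assumes "a \<in> vecs n"
  shows "(\<Sum>u\<in>vecs n. sg (dotp n u a)) = (if a = vzero then 2 ^ n else 0)"
proof -
  have s: "(\<Sum>u\<in>vecs n. sg (dotp n u a)) = (if \<forall>u\<in>vecs n. \<not> dotp n u a then int (card (vecs n)) else 0)"
    by (rule subgrp_sum[OF subgrp_vecs]) (simp add: dotp_add1)
  show ?thesis
  proof (cases "a = vzero")
    case True then show ?thesis using s card_vecs by simp
  next
    case False
    then obtain i where "a i" by (auto simp: vzero_def fun_eq_iff)
    with assms have "i < n" unfolding vecs_def using not_le by blast
    then have nh: "\<not> (\<forall>u\<in>vecs n. \<not> dotp n u a)" using ei_vecs dotp_ei \<open>a i\<close> by blast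
    show ?thesis by (simp only: s if_not_P[OF nh] if_not_P[OF False])
  qed
qed

lemma annih:
  assumes "subgrp n S"
  shows "card S * card {u \<in> vecs n. \<forall>s\<in>S. \<not> dotp n u s} = 2 ^ n"
proof -
  have fS: "finite S" using assms finite_subset finite_vecs unfolding subgrp_def by blast
  have "(\<Sum>u\<in>vecs n. \<Sum>s\<in>S. sg (dotp n u s)) = (\<Sum>s\<in>S. \<Sum>u\<in>vecs n. sg (dotp n u s))"
    by (rule sum.swap)
  also have "\<dots> = (\<Sum>s\<in>S. if s = vzero then 2 ^ n else 0)"
    using assms unfolding subgrp_def by (intro sum.cong refl char_sum) auto
  also have "\<dots> = 2 ^ n" using assms fS unfolding subgrp_def by (simp add: sum.delta)
  finally have 1: "(\<Sum>u\<in>vecs n. \<Sum>s\<in>S. sg (dotp n u s)) = 2 ^ n" .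
  have "(\<Sum>u\<in>vecs n. \<Sum>s\<in>S. sg (dotp n u s)) = (\<Sum>u\<in>vecs n. if \<forall>s\<in>S. \<not> dotp n u s then int (card S) else 0)"
    using assms by (intro sum.cong refl subgrp_sum) (auto simp: dotp_add2)
  also have "\<dots> = (\<Sum>u\<in>{u \<in> vecs n. \<forall>s\<in>S. \<not> dotp n u s}. int (card S))"
    by (simp only: sum.If_cases[OF finite_vecs] sum.neutral_const add_0_right Int_def mem_Collect_eq)
  also have "\<dots> = int (card S * card {u \<in> vecs n. \<forall>s\<in>S. \<not> dotp n u s})"
    by simp
  finally have "int (card S * card {u \<in> vecs n. \<forall>s\<in>S. \<not> dotp n u s}) = int (2 ^ n)" using 1 by simp
  then show ?thesis by (simp only: of_nat_eq_iff)
qed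

lemma subgrp_pow2: assumes "subgrp n S" shows "\<exists>d. card S = 2 ^ d"
proof -
  have "card S dvd 2 ^ n" unfolding annih[OF assms, symmetric] by (rule dvd_triv_left)
  then show ?thesis using divides_primepow_nat[OF two_is_prime_nat] by blast
qed



definition Dd :: "nat \<Rightarrow> ((nat \<Rightarrow> bool) \<Rightarrow> (nat \<Rightarrow> bool)) \<Rightarrow> (nat \<Rightarrow> bool) \<Rightarrow> (nat \<Rightarrow> bool) \<Rightarrow> (nat \<Rightarrow> bool) \<Rightarrow> bool" where
  "Dd n F b a x = ((component n F b (vadd x a) \<noteq> component n F b x) \<noteq> (component n F b a \<noteq> component n F b vzero))"

lemma Dd_sym: "Dd n F b a x = Dd n F b x a"
  unfolding Dd_def by (simp only: vadd_comm[of x a]) argo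

lemma qform_sum: "qform n Q x = odd (\<Sum>p\<in>{(i,j). i < j \<and> j < n \<and> Q i j}. of_bool (x (fst p) \<and> x (snd p)) :: nat)"
proof -
  have fin: "finite {(i,j). i < j \<and> j < n \<and> Q i j}"
    by (rule finite_subset[of _ "{..<n} \<times> {..<n}"]) auto
  have "{(i, j). i < j \<and> j < n \<and> Q i j \<and> x i \<and> x j} = {p \<in> {(i,j). i < j \<and> j < n \<and> Q i j}. x (fst p) \<and> x (snd p)}"
    by auto
  then show ?thesis unfolding qform_def by (simp only: card_odd_sum[OF fin])
qed

lemma qform_zero: "qform n Q vzero = False" unfolding qform_def vzero_def by simp

lemma even_sum_nat: "(\<And>p. p \<in> P \<Longrightarrow> even (f p :: nat)) \<Longrightarrow> even (sum f P)"
  by (simp add: dvd_sum)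

lemma qform_third:
  "((((((qform n Q (vadd (vadd x y) a) \<noteq> qform n Q (vadd x y)) \<noteq> qform n Q (vadd x a)) \<noteq> qform n Q (vadd y a))
     \<noteq> qform n Q x) \<noteq> qform n Q y) \<noteq> qform n Q a) = False"
proof -
  define P where "P = {(i,j). i < j \<and> j < n \<and> Q i j}"
  define e where "e (z::nat\<Rightarrow>bool) = (\<lambda>p. of_bool (z (fst p) \<and> z (snd p)) :: nat)" for z
  have q: "qform n Q z = odd (sum (e z) P)" for z unfolding qform_sum P_def e_def by simp
  have pt: "even (e (vadd (vadd x y) a) p + e (vadd x y) p + e (vadd x a) p + e (vadd y a) p + e x p + e y p + e a p)" for p
    unfolding e_def vadd_def by (cases "x (fst p)"; cases "x (snd p)"; cases "y (fst p)"; cases "y (snd p)";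
         cases "a (fst p)"; cases "a (snd p)"; simp)
  have "even (\<Sum>p\<in>P. e (vadd (vadd x y) a) p + e (vadd x y) p + e (vadd x a) p + e (vadd y a) p + e x p + e y p + e a p)"
    by (rule even_sum_nat) (rule pt)
  then have "even (sum (e (vadd (vadd x y) a)) P + sum (e (vadd x y)) P + sum (e (vadd x a)) P + sum (e (vadd y a)) P
     + sum (e x) P + sum (e y) P + sum (e a) P)" by (simp only: sum.distrib)
  then have "\<not> odd (sum (e (vadd (vadd x y) a)) P + sum (e (vadd x y)) P + sum (e (vadd x a)) P + sum (e (vadd y a)) P
     + sum (e x) P + sum (e y) P + sum (e a) P)" by blast
  then show ?thesis unfolding q odd_add by argo
qed

lemma Dd_lin:
  assumes "is_quadratic n F" "b \<in> vecs n" "a \<in> vecs n" "x \<in> vecs n" "y \<in> vecs n"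
  shows "Dd n F b a (vadd x y) = (Dd n F b a x \<noteq> Dd n F b a y)"
proof -
  have "\<exists>Q l c. \<forall>z\<in>vecs n. component n F b z = (c \<noteq> (dotp n l z \<noteq> qform n Q z))"
    using assms(1) assms(2) unfolding is_quadratic_def by (rule bspec)
  then obtain Q l c where f0: "\<forall>z\<in>vecs n. component n F b z = (c \<noteq> (dotp n l z \<noteq> qform n Q z))"
    by (elim exE)
  have f: "\<And>z. z \<in> vecs n \<Longrightarrow> component n F b z = (c \<noteq> (dotp n l z \<noteq> qform n Q z))"
    using f0 by (rule bspec)
  have t: "((((((qform n Q (vadd (vadd x y) a) \<noteq> qform n Q (vadd x y)) \<noteq> qform n Q (vadd x a)) \<noteq> qform n Q (vadd y a))
     \<noteq> qform n Q x) \<noteq> qform n Q y) \<noteq> qform n Q a) = False" by (rule qform_third)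
  have vs: "vadd (vadd x y) a \<in> vecs n" "vadd x y \<in> vecs n" "vadd x a \<in> vecs n" "vadd y a \<in> vecs n"
    using assms by auto
  show ?thesis unfolding Dd_def
    using t apply (simp only: f vs assms vecs_zero dotp_add2 qform_zero dotp_zero)
    by argo
qed



definition rad :: "nat \<Rightarrow> ((nat \<Rightarrow> bool) \<Rightarrow> (nat \<Rightarrow> bool)) \<Rightarrow> (nat \<Rightarrow> bool) \<Rightarrow> (nat \<Rightarrow> bool) set" where
  "rad n F b = {a \<in> vecs n. \<forall>x\<in>vecs n. \<not> Dd n F b a x}"

lemma rad_subgrp:
  assumes q: "is_quadratic n F" and b: "b \<in> vecs n"
  shows "subgrp n (rad n F b)"
  unfolding subgrp_def
proof (intro conjI ballI)
  show "rad n F b \<subseteq> vecs n" unfolding rad_def by auto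
  show "vzero \<in> rad n F b" unfolding rad_def Dd_def by simp
  fix a a' assume a: "a \<in> rad n F b" and a': "a' \<in> rad n F b"
  have av: "a \<in> vecs n" "a' \<in> vecs n" using a a' unfolding rad_def by auto
  have "\<not> Dd n F b (vadd a a') x" if x: "x \<in> vecs n" for x
  proof -
    have "Dd n F b (vadd a a') x = Dd n F b x (vadd a a')" by (rule Dd_sym)
    also have "\<dots> = (Dd n F b x a \<noteq> Dd n F b x a')" by (rule Dd_lin[OF q b x av])
    also have "\<dots> = (Dd n F b a x \<noteq> Dd n F b a' x)" using Dd_sym by metis
    finally show ?thesis using a a' x unfolding rad_def by auto
  qed
  then show "vadd a a' \<in> rad n F b" unfolding rad_def using av by auto
qed

lemma phi_add:
  assumes "a \<in> rad n F b" "a' \<in> rad n F b"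
  shows "(component n F b (vadd a a') \<noteq> component n F b vzero)
     = ((component n F b a \<noteq> component n F b vzero) \<noteq> (component n F b a' \<noteq> component n F b vzero))"
proof -
  have "a' \<in> vecs n" using assms(2) unfolding rad_def by auto
  then have "\<not> Dd n F b a a'" using assms(1) unfolding rad_def by auto
  then show ?thesis unfolding Dd_def by (simp only: vadd_comm[of a' a]) argo
qed

lemma if_helper: "(sg c * (if P then (2::int) ^ n else 0)) = (if P then 2 ^ n * sg c else 0)" by simp

lemma walsh_sq:
  assumes q: "is_quadratic n F" and b: "b \<in> vecs n" and u: "u \<in> vecs n"
  shows "(walsh n F b u)^2 = 2 ^ n * (\<Sum>a\<in>rad n F b. sg ((component n F b a \<noteq> component n F b vzero) \<noteq> dotp n a u))"
proof -
  define f where "f = component n F b"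
  define s where "s x = sg (f x \<noteq> dotp n x u)" for x
  define R where "R = rad n F b"
  have w: "walsh n F b u = (\<Sum>x\<in>vecs n. s x)" unfolding walsh_def s_def sg_def f_def by simp
  have "(walsh n F b u)^2 = (\<Sum>x\<in>vecs n. \<Sum>y\<in>vecs n. s x * s y)"
    unfolding w power2_eq_square sum_product by simp
  also have "\<dots> = (\<Sum>x\<in>vecs n. \<Sum>a\<in>vecs n. s x * s (vadd x a))"
  proof (rule sum.cong[OF refl])
    fix x assume x: "x \<in> vecs n"
    have bij: "bij_betw (\<lambda>a. vadd x a) (vecs n) (vecs n)"
      by (rule bij_betw_byWitness[where f'="\<lambda>a. vadd x a"]) (use x in \<open>auto simp: vadd_assoc[symmetric]\<close>)
    show "(\<Sum>y\<in>vecs n. s x * s y) = (\<Sum>a\<in>vecs n. s x * s (vadd x a))"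
      using sum.reindex_bij_betw[OF bij, of "\<lambda>y. s x * s y"] by simp
  qed
  also have "\<dots> = (\<Sum>a\<in>vecs n. \<Sum>x\<in>vecs n. s x * s (vadd x a))" by (rule sum.swap)
  also have "\<dots> = (\<Sum>a\<in>vecs n. if a \<in> R then 2 ^ n * sg ((f a \<noteq> f vzero) \<noteq> dotp n a u) else 0)"
  proof (rule sum.cong[OF refl])
    fix a assume a: "a \<in> vecs n"
    define c where "c = ((f a \<noteq> f vzero) \<noteq> dotp n a u)"
    have "s x * s (vadd x a) = sg c * sg (Dd n F b a x)" for x
    proof -
      have e: "((f x \<noteq> dotp n x u) \<noteq> (f (vadd x a) \<noteq> (dotp n x u \<noteq> dotp n a u)))
         = (((f a \<noteq> f vzero) \<noteq> dotp n a u) \<noteq> ((f (vadd x a) \<noteq> f x) \<noteq> (f a \<noteq> f vzero)))"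
        by argo
      show ?thesis unfolding s_def sg_mult c_def Dd_def f_def[symmetric] dotp_add1 e ..
    qed
    then have "(\<Sum>x\<in>vecs n. s x * s (vadd x a)) = sg c * (\<Sum>x\<in>vecs n. sg (Dd n F b a x))"
      by (simp add: sum_distrib_left)
    also have "(\<Sum>x\<in>vecs n. sg (Dd n F b a x)) = (if \<forall>x\<in>vecs n. \<not> Dd n F b a x then int (card (vecs n)) else 0)"
      by (rule subgrp_sum[OF subgrp_vecs]) (use Dd_lin[OF q b a] in auto)
    finally have calc: "(\<Sum>x\<in>vecs n. s x * s (vadd x a)) = sg c * (if \<forall>x\<in>vecs n. \<not> Dd n F b a x then int (card (vecs n)) else 0)" .
    have aR: "(a \<in> R) = (\<forall>x\<in>vecs n. \<not> Dd n F b a x)" unfolding R_def rad_def mem_Collect_eq using a by blast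
    show "(\<Sum>x\<in>vecs n. s x * s (vadd x a)) = (if a \<in> R then 2 ^ n * sg c else 0)"
      unfolding calc aR card_vecs of_nat_power of_nat_numeral by (rule if_helper)
  qed
  also have "\<dots> = (\<Sum>a\<in>R. 2 ^ n * sg ((f a \<noteq> f vzero) \<noteq> dotp n a u))"
  proof -
    have "R \<subseteq> vecs n" unfolding R_def rad_def by blast
    then have e: "{a \<in> vecs n. a \<in> R} = R" by blast
    show ?thesis
      using sum.inter_filter[OF finite_vecs[of n], where g="\<lambda>a. 2 ^ n * sg ((f a \<noteq> f vzero) \<noteq> dotp n a u)" and P="\<lambda>a. a \<in> R"]
      unfolding e by (rule sym)
  qed
  finally show ?thesis unfolding R_def f_def by (simp only: sum_distrib_left)
qed

lemma walsh_sq2: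
  assumes q: "is_quadratic n F" and b: "b \<in> vecs n" and u: "u \<in> vecs n"
  shows "(walsh n F b u)^2 = (if \<forall>a\<in>rad n F b. \<not> ((component n F b a \<noteq> component n F b vzero) \<noteq> dotp n a u)
     then 2 ^ n * int (card (rad n F b)) else 0)"
proof -
  have "(\<Sum>a\<in>rad n F b. sg ((component n F b a \<noteq> component n F b vzero) \<noteq> dotp n a u))
     = (if \<forall>a\<in>rad n F b. \<not> ((component n F b a \<noteq> component n F b vzero) \<noteq> dotp n a u)
     then int (card (rad n F b)) else 0)"
    by (rule subgrp_sum[OF rad_subgrp[OF q b]]) (intro ballI, simp only: phi_add dotp_add1, argo)
  then show ?thesis unfolding walsh_sq[OF q b u] by simp
qed

lemma walsh_exists:
  assumes q: "is_quadratic n F" and b: "b \<in> vecs n"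
  shows "\<exists>u\<in>vecs n. \<forall>a\<in>rad n F b. \<not> ((component n F b a \<noteq> component n F b vzero) \<noteq> dotp n a u)"
proof (rule ccontr)
  define R where "R = rad n F b"
  define p where "p a = (component n F b a \<noteq> component n F b vzero)" for a
  have sR: "subgrp n R" unfolding R_def by (rule rad_subgrp[OF q b])
  then have Rv: "R \<subseteq> vecs n" and zR: "vzero \<in> R"
    unfolding subgrp_def by auto
  have fR: "finite R" using finite_subset[OF Rv finite_vecs] .
  assume "\<not> ?thesis"
  then have nu: "\<forall>u\<in>vecs n. \<not> (\<forall>a\<in>R. \<not> (p a \<noteq> dotp n a u))" unfolding R_def p_def by blast
  have "(\<Sum>u\<in>vecs n. \<Sum>a\<in>R. sg (p a \<noteq> dotp n a u)) = (\<Sum>u\<in>vecs n. (0::int))"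
  proof (rule sum.cong[OF refl])
    fix u assume u: "u \<in> vecs n"
    have "(\<Sum>a\<in>R. sg (p a \<noteq> dotp n a u)) = (if \<forall>a\<in>R. \<not> (p a \<noteq> dotp n a u) then int (card R) else 0)"
      by (rule subgrp_sum[OF sR]) (unfold R_def p_def, intro ballI, simp only: phi_add dotp_add1, argo)
    moreover have nh: "\<not> (\<forall>a\<in>R. \<not> (p a \<noteq> dotp n a u))" using nu u by blast
    ultimately show "(\<Sum>a\<in>R. sg (p a \<noteq> dotp n a u)) = 0" by (simp only: if_not_P[OF nh] if_False)
  qed
  moreover have "(\<Sum>u\<in>vecs n. \<Sum>a\<in>R. sg (p a \<noteq> dotp n a u)) = (\<Sum>a\<in>R. \<Sum>u\<in>vecs n. sg (p a) * sg (dotp n u a))"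
    by (subst sum.swap) (simp only: sg_mult dotp_comm)
  moreover have "\<dots> = (\<Sum>a\<in>R. sg (p a) * (if a = vzero then 2 ^ n else 0))"
    using Rv by (intro sum.cong refl) (simp add: sum_distrib_left[symmetric] char_sum subset_iff)
  moreover have "\<dots> = sg (p vzero) * 2 ^ n"
    using fR zR by (simp add: if_distrib sum.delta cong: if_cong)
  moreover have "sg (p vzero) = 1" unfolding p_def sg_def by simp
  ultimately show False by simp
qed

lemma amp_sq:
  assumes q: "is_quadratic n F" and b: "b \<in> vecs n"
  shows "amplitude n F b \<ge> 0 \<and> (amplitude n F b)^2 = 2 ^ n * real (card (rad n F b))"
proof -
  obtain u0 where u0: "u0 \<in> vecs n"
    "\<forall>a\<in>rad n F b. \<not> ((component n F b a \<noteq> component n F b vzero) \<noteq> dotp n a u0)"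
    using walsh_exists[OF q b] by blast
  define M where "M = \<bar>walsh n F b u0\<bar>"
  have M2: "M^2 = 2 ^ n * int (card (rad n F b))"
    unfolding M_def power2_abs walsh_sq2[OF q b u0(1)] using u0(2) by simp
  have le: "\<bar>walsh n F b u\<bar> \<le> M" if "u \<in> vecs n" for u
  proof -
    have "(walsh n F b u)^2 \<le> M^2" unfolding M2 walsh_sq2[OF q b that] by simp
    then show ?thesis unfolding M_def abs_le_square_iff by simp
  qed
  have "Max {\<bar>walsh n F b a\<bar> | a. a \<in> vecs n} = M"
  proof (rule Max_eqI)
    have "{\<bar>walsh n F b a\<bar> | a. a \<in> vecs n} = (\<lambda>a. \<bar>walsh n F b a\<bar>) ` vecs n" by blast
    then show "finite {\<bar>walsh n F b a\<bar> | a. a \<in> vecs n}" by simp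
    show "y \<le> M" if "y \<in> {\<bar>walsh n F b a\<bar> | a. a \<in> vecs n}" for y using that le by blast
    show "M \<in> {\<bar>walsh n F b a\<bar> | a. a \<in> vecs n}" unfolding M_def using u0(1) by blast
  qed
  then have am: "amplitude n F b = real_of_int M" unfolding amplitude_def by simp
  have "M \<ge> 0" unfolding M_def by simp
  moreover have "(real_of_int M)^2 = 2 ^ n * real (card (rad n F b))"
    using arg_cong[OF M2, of real_of_int] by simp
  ultimately show ?thesis unfolding am by simp
qed



lemma partition:
  assumes Fv: "\<forall>x \<in> vecs n. F x \<in> vecs n" and q: "is_quadratic n F" and apn: "is_APN n F"
    and a: "a \<in> vecs n" and a0: "a \<noteq> vzero"
  shows "card {b \<in> vecs n. b \<noteq> vzero \<and> a \<in> rad n F b} = 1"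
proof -
  define G where "G x = vadd (vadd (F (vadd x a)) (F x)) (vadd (F a) (F vzero))" for x
  have Gv: "G x \<in> vecs n" if "x \<in> vecs n" for x unfolding G_def using that a Fv by simp
  have dG: "dotp n b (G x) = Dd n F b a x" for b x
    unfolding G_def Dd_def component_def dotp_add2 ..
  have Gadd: "G (vadd x y) = vadd (G x) (G y)" if x: "x \<in> vecs n" and y: "y \<in> vecs n" for x y
  proof
    fix i
    show "G (vadd x y) i = vadd (G x) (G y) i"
    proof (cases "i < n")
      case True
      have "G (vadd x y) i = dotp n (ei i) (G (vadd x y))" using dotp_ei[OF True] by simp
      also have "\<dots> = Dd n F (ei i) a (vadd x y)" by (rule dG)
      also have "\<dots> = (Dd n F (ei i) a x \<noteq> Dd n F (ei i) a y)" by (rule Dd_lin[OF q ei_vecs[OF True] a x y])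
      also have "\<dots> = (G x i \<noteq> G y i)" unfolding dG[symmetric] dotp_ei[OF True] ..
      finally show ?thesis unfolding vadd_def .
    next
      case False
      then have "\<not> G z i" if "z \<in> vecs n" for z using Gv[OF that] unfolding vecs_def by simp
      then have "\<not> G (vadd x y) i" "\<not> G x i" "\<not> G y i" using x y by auto
      then show ?thesis unfolding vadd_def by simp
    qed
  qed
  define c where "c = vadd (F vzero) (F a)"
  have cv: "c \<in> vecs n" unfolding c_def using Fv a by simp
  define K where "K = {x \<in> vecs n. vadd (F x) (F (vadd x a)) = c}"
  have Kle: "card K \<le> 2" using apn a a0 cv unfolding is_APN_def K_def by blast
  have G0: "G x = vzero \<longleftrightarrow> x \<in> K" if "x \<in> vecs n" for x
    unfolding G_def K_def c_def vadd_eq_zero using that by (simp add: vadd_comm)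
  have zK: "vzero \<in> K" unfolding K_def c_def by simp
  have aK: "a \<in> K" unfolding K_def c_def using a by (simp add: vadd_comm)
  have fK: "finite K" unfolding K_def by simp
  have c2: "card {vzero, a} = 2" using a0 by simp
  have sub: "{vzero, a} \<subseteq> K" using zK aK by simp
  have "card K = 2" using card_mono[OF fK sub] c2 Kle by linarith
  then have K: "K = {vzero, a}" using card_subset_eq[OF fK sub] c2 by simp
  define Im where "Im = G ` vecs n"
  have fib: "{x \<in> vecs n. G x = G x0} = {x0, vadd a x0}" if x0: "x0 \<in> vecs n" for x0
  proof -
    have "G x = G x0 \<longleftrightarrow> x = x0 \<or> x = vadd a x0" if x: "x \<in> vecs n" for x
    proof -
      have "G x = G x0 \<longleftrightarrow> G (vadd x x0) = vzero" unfolding Gadd[OF x x0] vadd_eq_zero ..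
      also have "\<dots> \<longleftrightarrow> vadd x x0 \<in> K" using G0 x x0 by simp
      also have "\<dots> \<longleftrightarrow> x = x0 \<or> x = vadd a x0" unfolding K
        by (metis insertCI insertE singletonD vadd_cancel vadd_eq_zero)
      finally show ?thesis .
    qed
    then show ?thesis using x0 a by auto
  qed
  have "card (vecs n) = (\<Sum>y\<in>Im. card {x \<in> vecs n. G x = y})"
    unfolding Im_def using sum.image_gen[OF finite_vecs[of n], of "\<lambda>_. 1::nat" G] by (simp only: card_eq_sum)
  also have "\<dots> = (\<Sum>y\<in>Im. 2)"
  proof (rule sum.cong[OF refl])
    fix y assume "y \<in> Im"
    then obtain x0 where x0: "x0 \<in> vecs n" "y = G x0" unfolding Im_def by blast
    have "vadd a x0 \<noteq> x0" using a0 by (metis vadd_cancel vadd_comm vadd_zero(2) vadd_self vadd_assoc)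
    then show "card {x \<in> vecs n. G x = y} = 2" unfolding x0(2) fib[OF x0(1)] by simp
  qed
  finally have cIm: "2 ^ n = 2 * card Im" unfolding card_vecs by simp
  have sIm: "subgrp n Im" unfolding subgrp_def Im_def
  proof (intro conjI ballI)
    show "G ` vecs n \<subseteq> vecs n" using Gv by blast
    show "vzero \<in> G ` vecs n" using G0[of vzero] zK by (metis image_eqI vecs_zero)
    fix u v assume "u \<in> G ` vecs n" "v \<in> G ` vecs n"
    then obtain x y where "x \<in> vecs n" "y \<in> vecs n" "u = G x" "v = G y" by blast
    then show "vadd u v \<in> G ` vecs n" using Gadd by (metis image_eqI vecs_vadd)
  qed
  define Ann where "Ann = {u \<in> vecs n. \<forall>s\<in>Im. \<not> dotp n u s}"
  have "card Im * card Ann = 2 * card Im" using annih[OF sIm] cIm unfolding Ann_def by simp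
  moreover have "card Im > 0" using cIm by (metis nat_0_less_mult_iff not_gr0 pos2 zero_less_power mult_0_right)
  ultimately have cA: "card Ann = 2" by simp
  have eq: "{b \<in> vecs n. b \<noteq> vzero \<and> a \<in> rad n F b} = Ann - {vzero}"
  proof -
    have "b \<in> Ann \<longleftrightarrow> a \<in> rad n F b" if b: "b \<in> vecs n" for b
      unfolding Ann_def Im_def rad_def using a b by (auto simp: dG)
    then show ?thesis unfolding Ann_def by auto
  qed
  have "vzero \<in> Ann" unfolding Ann_def by simp
  moreover have "finite Ann" unfolding Ann_def by simp
  ultimately show ?thesis unfolding eq using cA by simp
qed



lemma pow_m1_dvd: "((2::int) ^ a - 1) dvd (2 ^ (a * q) - 1)"
proof (induction q)
  case 0 then show ?case by simp
next
  case (Suc q)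
  have eq: "(2::int) ^ (a * Suc q) - 1 = 2 ^ a * (2 ^ (a * q) - 1) + (2 ^ a - 1)"
    by (simp add: power_add algebra_simps)
  have "((2::int) ^ a - 1) dvd (2 ^ a * (2 ^ (a * q) - 1) + (2 ^ a - 1))"
    by (rule dvd_add[OF dvd_mult[OF Suc.IH] dvd_refl])
  then show ?case unfolding eq .
qed

lemma pow_m1_dvd_imp:
  assumes "a \<ge> 1" "((2::int) ^ a - 1) dvd (2 ^ b - 1)"
  shows "a dvd b"
proof -
  define q r where "q = b div a" and "r = b mod a"
  have b: "b = a * q + r" unfolding q_def r_def by simp
  have r: "r < a" unfolding r_def using assms(1) by simp
  have "(2::int) ^ b - 1 = 2 ^ r * (2 ^ (a * q) - 1) + (2 ^ r - 1)"
    unfolding b by (simp add: power_add algebra_simps)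
  then have "((2::int) ^ a - 1) dvd (2 ^ r - 1)"
    using assms(2) pow_m1_dvd[of a q] by (metis dvd_add_right_iff dvd_mult)
  moreover have "(2::int) ^ r - 1 < 2 ^ a - 1" using r by simp
  moreover have "(2::int) ^ r - 1 \<ge> 0" by simp
  ultimately have "(2::int) ^ r - 1 = 0" using zdvd_imp_le by fastforce
  then have "r = 0" by simp
  then show ?thesis unfolding r_def by auto
qed

lemma heden_arith:
  fixes U :: "'a set" and t :: "'a \<Rightarrow> nat" and k d1 d2 N :: nat
  assumes fin: "finite U" and cU: "card U = N" and u0: "u0 \<in> U" "t u0 = k"
    and tle: "\<forall>u\<in>U. t u \<le> k"
    and cong: "\<forall>u\<in>U. (2::int) ^ (d2 - d1) dvd (int (t u) - int k)"
    and m1: "(\<Sum>u\<in>U. int (t u)) * 2 ^ d1 = int k * int N"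
    and m2: "(\<Sum>u\<in>U. int (t u) ^ 2) * 2 ^ (2 * d1) = int N * int k * (2 ^ d1 + int k - 1)"
    and d1: "d1 \<ge> 1" and d12: "d1 < d2" and k1: "k \<ge> 1"
  shows "(\<not> 2 ^ (d2 - d1) dvd k \<and> d2 < 2 * d1 \<longrightarrow> k \<ge> 2 ^ d1 + 1)
       \<and> (\<not> 2 ^ (d2 - d1) dvd k \<and> d2 \<ge> 2 * d1 \<longrightarrow>
            (d1 dvd d2 \<and> k = (2 ^ d2 - 1) div (2 ^ d1 - 1)) \<or> k > 2 * 2 ^ (d2 - d1))
       \<and> (2 ^ (d2 - d1) dvd k \<and> d2 \<le> 2 * d1 \<longrightarrow> k \<ge> 2 ^ d2 - 2 ^ d1 + 2 ^ (d2 - d1))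
       \<and> (2 ^ (d2 - d1) dvd k \<and> d2 \<ge> 2 * d1 \<longrightarrow> k \<ge> 2 ^ d2)"
proof -
  define D :: int where "D = 2 ^ (d2 - d1)"
  define Q :: int where "Q = 2 ^ d1"
  define S1 where "S1 = (\<Sum>u\<in>U. int (t u))"
  define S2 where "S2 = (\<Sum>u\<in>U. int (t u) ^ 2)"
  have PDQ: "(2::int) ^ d2 = D * Q" unfolding D_def Q_def using d12 by (simp add: power_add[symmetric])
  have Q2: "Q \<ge> 2" unfolding Q_def using power_increasing[OF d1, of "2::int"] by simp
  have D2: "D \<ge> 2" unfolding D_def using power_increasing[of 1 "d2 - d1" "2::int"] d12 by simp
  have N0: "N > 0" using cU fin u0 card_gt_0_iff by blast
  have m1': "Q * S1 = int k * int N" using m1 unfolding Q_def S1_def by (simp add: mult.commute)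
  have m2': "Q * Q * S2 = int N * int k * (Q + int k - 1)"
    using m2 unfolding Q_def S2_def by (simp add: power_mult mult.commute power2_eq_square)
  have kD: "int k \<noteq> 0" using k1 by simp
  have Dk: "(2::nat) ^ (d2 - d1) dvd k \<longleftrightarrow> D dvd int k"
  proof -
    have "D = int (2 ^ (d2 - d1))" unfolding D_def by simp
    then show ?thesis by (simp only: of_nat_dvd_iff)
  qed
  have P1: "k \<ge> 2 ^ d1 + 1" if nd: "\<not> D dvd int k"
  proof -
    have t1: "t u \<ge> 1" if "u \<in> U" for u
    proof (rule ccontr)
      assume "\<not> t u \<ge> 1"
      then have "t u = 0" by simp
      have c: "D dvd int (t u) - int k" using cong that unfolding D_def by blast
      then have "D dvd int k" using \<open>t u = 0\<close> by simp
      then show False using nd by simp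
    qed
    have "S1 \<ge> (\<Sum>u\<in>U. 1)" unfolding S1_def using t1 by (intro sum_mono) simp
    then have S1N: "S1 \<ge> int N" using cU by simp
    have "Q * int N \<le> Q * S1" by (rule mult_left_mono[OF S1N]) (use Q2 in simp)
    then have "int k * int N \<ge> Q * int N" using m1' by simp
    then have kQ: "int k \<ge> Q" using N0 by simp
    have "int k \<noteq> Q"
    proof
      assume kq: "int k = Q"
      then have "Q * S1 = Q * int N" using m1' by simp
      then have "S1 = int N" using Q2 by simp
      then have s0: "(\<Sum>u\<in>U. int (t u) - 1) = 0" unfolding S1_def using cU by (simp add: sum_subtractf)
      have nn: "int (t u) - 1 \<ge> 0" if "u \<in> U" for u using t1[OF that] by simp
      have "\<forall>u\<in>U. int (t u) - 1 = 0" using sum_nonneg_eq_0_iff[OF fin, of "\<lambda>u. int (t u) - 1"] nn s0 by simp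
      then have "int k = 1" using u0 by auto
      then show False using kq Q2 by simp
    qed
    then have "int k \<ge> Q + 1" using kQ by simp
    then have "int (2 ^ d1 + 1) \<le> int k" unfolding Q_def by simp
    then show ?thesis by (simp only: of_nat_le_iff)
  qed
  have P2: "int k * (Q - 1) = D * Q - 1" if nd: "\<not> D dvd int k" and kle: "int k \<le> 2 * D"
  proof -
    have mz: "(int k - int (t u)) * (int k - int (t u) - D) = 0" if u: "u \<in> U" for u
    proof -
      have "D dvd int (t u) - int k" using cong u unfolding D_def by blast
      then have "D dvd int k - int (t u)" by (simp only: dvd_diff_commute)
      then obtain j where j: "int k - int (t u) = D * j" by (rule dvdE)
      have "t u \<le> k" using tle u by blast
      then have "D * j \<ge> 0" unfolding j[symmetric] by simp
      then have "j \<ge> 0" using D2 by (simp add: zero_le_mult_iff)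
      moreover have "j < 2"
      proof (rule ccontr)
        assume "\<not> j < 2"
        then have "D * j \<ge> D * 2" using D2 by (intro mult_left_mono) auto
        then have "int k \<ge> 2 * D" using j by simp
        then have "int k = 2 * D" using kle by simp
        then show False using nd by simp
      qed
      ultimately have "j = 0 \<or> j = 1" by auto
      then show ?thesis using j by auto
    qed
    have "0 = (\<Sum>u\<in>U. (int k - int (t u)) * (int k - int (t u) - D))"
      by (rule sym, rule sum.neutral, intro ballI, rule mz, assumption)
    also have "\<dots> = (\<Sum>u\<in>U. (int k * int k - int k * D) + (D - 2 * int k) * int (t u) + int (t u) ^ 2)"
      by (intro sum.cong refl) (simp add: algebra_simps power2_eq_square)
    also have "\<dots> = int N * (int k * int k - int k * D) + (D - 2 * int k) * S1 + S2"
      unfolding S1_def S2_def using cU by (simp add: sum.distrib sum_distrib_left)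
    finally have E: "0 = int N * (int k * int k - int k * D) + (D - 2 * int k) * S1 + S2" .
    have "0 = Q * Q * (int N * (int k * int k - int k * D) + (D - 2 * int k) * S1 + S2)" using E by simp
    also have "\<dots> = Q * Q * int N * (int k * int k - int k * D) + (D - 2 * int k) * Q * (Q * S1) + Q * Q * S2"
      by (simp add: algebra_simps)
    also have "\<dots> = Q * Q * int N * (int k * int k - int k * D) + (D - 2 * int k) * Q * (int k * int N) + int N * int k * (Q + int k - 1)"
      unfolding m1' m2' ..
    also have "\<dots> = (int N * int k) * ((Q - 1) * (int k * (Q - 1) + 1 - D * Q))"
      by (simp add: algebra_simps)
    finally have "(int N * int k) * ((Q - 1) * (int k * (Q - 1) + 1 - D * Q)) = 0" by simp
    then have "int k * (Q - 1) + 1 - D * Q = 0" using N0 kD Q2 by simp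
    then show ?thesis by simp
  qed
  have P34: "int k \<ge> D * Q - Q + 1" if dk: "D dvd int k"
  proof -
    have nn: "int (t u) * (int (t u) - D) \<ge> 0" if u: "u \<in> U" for u
    proof -
      have c: "D dvd int (t u) - int k" using cong u unfolding D_def by blast
      have "D dvd (int (t u) - int k) + int k" by (rule dvd_add[OF c dk])
      then have "D dvd int (t u)" by simp
      then obtain j where j: "int (t u) = D * j" by (auto simp: dvd_def)
      have "D * j \<ge> 0" using j by simp
      then have "j \<ge> 0" using D2 by (simp add: zero_le_mult_iff)
      then have "j = 0 \<or> j \<ge> 1" by auto
      then show ?thesis
      proof
        assume "j = 0" then show ?thesis using j by simp
      next
        assume "j \<ge> 1"
        then have "D * 1 \<le> D * j" using D2 by (intro mult_left_mono) auto
        then have "int (t u) \<ge> D" using j by simp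
        then show ?thesis by simp
      qed
    qed
    have "0 \<le> (\<Sum>u\<in>U. int (t u) * (int (t u) - D))" using nn by (intro sum_nonneg) auto
    also have "\<dots> = S2 - D * S1" unfolding S1_def S2_def
      by (simp add: algebra_simps power2_eq_square sum_subtractf sum_distrib_left)
    finally have "S2 \<ge> D * S1" by simp
    then have "Q * Q * S2 \<ge> Q * Q * (D * S1)" using Q2 by (intro mult_left_mono) auto
    moreover have "Q * Q * (D * S1) = D * Q * (Q * S1)" by (simp add: algebra_simps)
    ultimately have "int N * int k * (Q + int k - 1) \<ge> D * Q * (int k * int N)"
      unfolding m2' m1' by simp
    then have "int N * int k * (Q + int k - 1) \<ge> (int N * int k) * (D * Q)"
      by (simp add: algebra_simps)
    then have "Q + int k - 1 \<ge> D * Q" using N0 k1 by (simp add: mult_le_cancel_left_pos)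
    then show ?thesis by simp
  qed
  show ?thesis
  proof (intro conjI impI)
    assume "\<not> 2 ^ (d2 - d1) dvd k \<and> d2 < 2 * d1"
    then show "k \<ge> 2 ^ d1 + 1" using P1 Dk by blast
  next
    assume a: "\<not> 2 ^ (d2 - d1) dvd k \<and> d2 \<ge> 2 * d1"
    show "(d1 dvd d2 \<and> k = (2 ^ d2 - 1) div (2 ^ d1 - 1)) \<or> k > 2 * 2 ^ (d2 - d1)"
    proof (cases "k > 2 * 2 ^ (d2 - d1)")
      case True then show ?thesis by simp
    next
      case False
      then have "k \<le> 2 * 2 ^ (d2 - d1)" by simp
      then have "int k \<le> int (2 * 2 ^ (d2 - d1))" by (simp only: of_nat_le_iff)
      then have "int k \<le> 2 * D" unfolding D_def by simp
      then have e: "int k * (Q - 1) = D * Q - 1" using P2 a Dk by blast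
      then have e2: "int k * (2 ^ d1 - 1) = 2 ^ d2 - 1" unfolding PDQ Q_def by simp
      then have "((2::int) ^ d1 - 1) dvd (2 ^ d2 - 1)" by (intro dvdI[of _ _ "int k"]) (simp add: mult.commute)
      then have "d1 dvd d2" using pow_m1_dvd_imp d1 by blast
      moreover have kk: "k * (2 ^ d1 - 1) = 2 ^ d2 - 1"
      proof -
        have p1: "(1::nat) \<le> 2 ^ d1" and p2: "(1::nat) \<le> 2 ^ d2" by simp_all
        have "int (k * (2 ^ d1 - 1)) = int k * (2 ^ d1 - 1)"
          by (simp only: of_nat_mult of_nat_diff[OF p1] of_nat_power of_nat_numeral of_nat_1)
        also have "\<dots> = int (2 ^ d2 - 1)" using e2 
          by (simp only: of_nat_diff[OF p2] of_nat_power of_nat_numeral of_nat_1)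
        finally show ?thesis by (simp only: of_nat_eq_iff)
      qed
      moreover have "(2::nat) ^ d1 - 1 > 0"
      proof -
        have "(2::nat) ^ 1 \<le> 2 ^ d1" using d1 by (intro power_increasing) auto
        then show ?thesis by simp
      qed
      then have "(2 ^ d2 - 1) div (2 ^ d1 - 1) = k" unfolding kk[symmetric] by simp
      ultimately show ?thesis by auto
    qed
  next
    assume a: "2 ^ (d2 - d1) dvd k \<and> d2 \<le> 2 * d1"
    then have dk: "D dvd int k" using Dk by blast
    have ik: "int k \<ge> D * Q - Q + 1" using P34[OF dk] .
    obtain j where j: "int k = D * j" using dk by (auto simp: dvd_def)
    define R :: int where "R = 2 ^ (d1 - (d2 - d1))"
    have QDR: "Q = D * R" unfolding Q_def D_def R_def using a d12 by (simp add: power_add[symmetric])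
    have "D * j > D * (Q - R)" using ik j QDR by (simp add: algebra_simps)
    then have "j > Q - R" using D2 by (simp add: mult_less_cancel_left_pos)
    then have "j \<ge> Q - R + 1" by simp
    then have "D * j \<ge> D * (Q - R + 1)" using D2 by (intro mult_left_mono) auto
    then have "int k \<ge> D * Q - Q + D" using j QDR by (simp add: algebra_simps)
    then have "int k \<ge> 2 ^ d2 - 2 ^ d1 + 2 ^ (d2 - d1)" unfolding PDQ Q_def D_def by simp
    moreover have le: "(2::nat) ^ d1 \<le> 2 ^ d2" using d12 by (simp add: power_increasing)
    have "int (2 ^ d2 - 2 ^ d1 + 2 ^ (d2 - d1)) = 2 ^ d2 - 2 ^ d1 + 2 ^ (d2 - d1)"
      by (simp only: of_nat_add of_nat_diff[OF le] of_nat_power of_nat_numeral)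
    ultimately have "int (2 ^ d2 - 2 ^ d1 + 2 ^ (d2 - d1)) \<le> int k" by simp
    then show "k \<ge> 2 ^ d2 - 2 ^ d1 + 2 ^ (d2 - d1)" by (simp only: of_nat_le_iff)
  next
    assume a: "2 ^ (d2 - d1) dvd k \<and> d2 \<ge> 2 * d1"
    then have dk: "D dvd int k" using Dk by blast
    have ik: "int k \<ge> D * Q - Q + 1" using P34[OF dk] .
    obtain j where j: "int k = D * j" using dk by (auto simp: dvd_def)
    have "d1 \<le> d2 - d1" using a by linarith
    then have QD: "Q \<le> D" unfolding Q_def D_def by (simp add: power_increasing)
    have "D * j > D * (Q - 1)" using ik j QD by (simp add: algebra_simps)
    then have "j > Q - 1" using D2 by (simp add: mult_less_cancel_left_pos)
    then have "j \<ge> Q" by simp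
    then have "D * j \<ge> D * Q" using D2 by (intro mult_left_mono) auto
    then have "int k \<ge> 2 ^ d2" using j PDQ by simp
    then have "int (2 ^ d2) \<le> int k" by simp
    then show "k \<ge> 2 ^ d2" by (simp only: of_nat_le_iff)
  qed
qed



definition ind :: "nat \<Rightarrow> (nat \<Rightarrow> bool) set \<Rightarrow> (nat \<Rightarrow> bool) \<Rightarrow> int" where
  "ind n A u = (\<Sum>x\<in>A. sg (dotp n u x))"

lemma ind_subgrp: "subgrp n A \<Longrightarrow> ind n A u = (if \<forall>x\<in>A. \<not> dotp n u x then int (card A) else 0)"
  unfolding ind_def by (rule subgrp_sum) (auto simp: dotp_add2)

lemma single_sum:
  assumes "A \<subseteq> vecs n"
  shows "(\<Sum>u\<in>vecs n. ind n A u) = (if vzero \<in> A then 2 ^ n else 0)"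
proof -
  have fA: "finite A" using finite_subset[OF assms finite_vecs] .
  have "(\<Sum>u\<in>vecs n. ind n A u) = (\<Sum>x\<in>A. \<Sum>u\<in>vecs n. sg (dotp n u x))"
    unfolding ind_def by (rule sum.swap)
  also have "\<dots> = (\<Sum>x\<in>A. if x = vzero then 2 ^ n else 0)"
    using assms by (intro sum.cong refl char_sum) auto
  also have "\<dots> = (if vzero \<in> A then 2 ^ n else 0)" using fA by (simp add: sum.delta)
  finally show ?thesis .
qed

lemma pair_sum:
  assumes "A \<subseteq> vecs n" "C \<subseteq> vecs n"
  shows "(\<Sum>u\<in>vecs n. ind n A u * ind n C u) = 2 ^ n * int (card (A \<inter> C))"
proof -
  have fA: "finite A" using finite_subset[OF assms(1) finite_vecs] .
  have fC: "finite C" using finite_subset[OF assms(2) finite_vecs] .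
  have "(\<Sum>u\<in>vecs n. ind n A u * ind n C u) = (\<Sum>u\<in>vecs n. \<Sum>x\<in>A. \<Sum>y\<in>C. sg (dotp n u (vadd x y)))"
    unfolding ind_def sum_product sg_mult dotp_add2 ..
  also have "\<dots> = (\<Sum>x\<in>A. \<Sum>u\<in>vecs n. \<Sum>y\<in>C. sg (dotp n u (vadd x y)))" by (rule sum.swap)
  also have "\<dots> = (\<Sum>x\<in>A. \<Sum>y\<in>C. \<Sum>u\<in>vecs n. sg (dotp n u (vadd x y)))"
    by (intro sum.cong refl sum.swap)
  also have "\<dots> = (\<Sum>x\<in>A. \<Sum>y\<in>C. if x = y then 2 ^ n else 0)"
  proof (intro sum.cong refl)
    fix x y assume "x \<in> A" "y \<in> C"
    then have "vadd x y \<in> vecs n" using assms by (meson subsetD vecs_vadd)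
    then show "(\<Sum>u\<in>vecs n. sg (dotp n u (vadd x y))) = (if x = y then 2 ^ n else 0)"
      using char_sum vadd_eq_zero by simp
  qed
  also have "\<dots> = (\<Sum>x\<in>A. if x \<in> C then 2 ^ n else 0)"
    using fC by (intro sum.cong refl) (simp add: sum.delta)
  also have "\<dots> = 2 ^ n * int (card (A \<inter> C))"
    using fA by (simp add: sum.If_cases Int_def)
  finally show ?thesis .
qed

lemma part_sum:
  assumes finB: "finite B" and sub: "\<forall>b\<in>B. subgrp n (V b)"
    and part: "\<forall>x\<in>vecs n. x \<noteq> vzero \<longrightarrow> card {b\<in>B. x \<in> V b} = 1"
    and u: "u \<in> vecs n"
  shows "(\<Sum>b\<in>B. ind n (V b) u) = int (card B) - 1 + (if u = vzero then 2 ^ n else 0)"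
proof -
  define g where "g x = sg (dotp n u x)" for x
  have Vv: "V b \<subseteq> vecs n" "vzero \<in> V b" "finite (V b)" if "b \<in> B" for b
    using sub that finite_subset[OF _ finite_vecs] unfolding subgrp_def by auto
  have "(\<Sum>b\<in>B. ind n (V b) u) = (\<Sum>b\<in>B. g vzero + (\<Sum>x\<in>V b - {vzero}. g x))"
    unfolding ind_def g_def[symmetric] using Vv by (intro sum.cong refl) (simp add: sum.remove)
  also have "\<dots> = int (card B) + (\<Sum>b\<in>B. \<Sum>x\<in>V b - {vzero}. g x)"
    unfolding g_def by (simp add: sum.distrib sg_def)
  also have "(\<Sum>b\<in>B. \<Sum>x\<in>V b - {vzero}. g x) = (\<Sum>b\<in>B. \<Sum>x\<in>vecs n - {vzero}. if x \<in> V b then g x else 0)"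
  proof (rule sum.cong[OF refl])
    fix b assume b: "b \<in> B"
    have e: "(vecs n - {vzero}) \<inter> {x. x \<in> V b} = V b - {vzero}" using Vv[OF b] by auto
    have "(\<Sum>x\<in>vecs n - {vzero}. if x \<in> V b then g x else 0)
       = (\<Sum>x\<in>(vecs n - {vzero}) \<inter> {x. x \<in> V b}. g x) + (\<Sum>x\<in>(vecs n - {vzero}) \<inter> - {x. x \<in> V b}. 0)"
      by (rule sum.If_cases) simp
    then show "(\<Sum>x\<in>V b - {vzero}. g x) = (\<Sum>x\<in>vecs n - {vzero}. if x \<in> V b then g x else 0)"
      unfolding e by simp
  qed
  also have "\<dots> = (\<Sum>x\<in>vecs n - {vzero}. \<Sum>b\<in>B. if x \<in> V b then g x else 0)" by (rule sum.swap)
  also have "\<dots> = (\<Sum>x\<in>vecs n - {vzero}. g x)"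
  proof (intro sum.cong refl)
    fix x assume x: "x \<in> vecs n - {vzero}"
    have "(\<Sum>b\<in>B. if x \<in> V b then g x else 0) = g x * int (card {b \<in> B. x \<in> V b})"
      using finB by (simp add: sum.If_cases Int_def mult.commute)
    also have "\<dots> = g x" using part x by simp
    finally show "(\<Sum>b\<in>B. if x \<in> V b then g x else 0) = g x" .
  qed
  also have "\<dots> = (\<Sum>x\<in>vecs n. g x) - g vzero" by (simp add: sum_diff1)
  also have "\<dots> = (if u = vzero then 2 ^ n else 0) - 1"
    unfolding g_def using char_sum[OF u] dotp_comm[of n u] by (simp add: sg_def)
  finally show ?thesis by simp
qed

lemma heden_struct:
  fixes B :: "'b set" and V :: "'b \<Rightarrow> (nat \<Rightarrow> bool) set" and n d1 d2 k :: nat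
  assumes finB: "finite B" and sub: "\<forall>b\<in>B. subgrp n (V b)"
    and part: "\<forall>x\<in>vecs n. x \<noteq> vzero \<longrightarrow> card {b\<in>B. x \<in> V b} = 1"
    and cls: "\<forall>b\<in>B. card (V b) = 1 \<or> card (V b) = 2 ^ d1 \<or> 2 ^ d2 dvd card (V b)"
    and d1: "d1 \<ge> 1" and d12: "d1 < d2" and d2n: "d2 \<le> n"
    and ne: "\<exists>b\<in>B. card (V b) = 2 ^ d1"
    and kdef: "k = card {b\<in>B. card (V b) = 2 ^ d1}"
  shows "(\<not> 2 ^ (d2 - d1) dvd k \<and> d2 < 2 * d1 \<longrightarrow> k \<ge> 2 ^ d1 + 1)
       \<and> (\<not> 2 ^ (d2 - d1) dvd k \<and> d2 \<ge> 2 * d1 \<longrightarrow>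
            (d1 dvd d2 \<and> k = (2 ^ d2 - 1) div (2 ^ d1 - 1)) \<or> k > 2 * 2 ^ (d2 - d1))
       \<and> (2 ^ (d2 - d1) dvd k \<and> d2 \<le> 2 * d1 \<longrightarrow> k \<ge> 2 ^ d2 - 2 ^ d1 + 2 ^ (d2 - d1))
       \<and> (2 ^ (d2 - d1) dvd k \<and> d2 \<ge> 2 * d1 \<longrightarrow> k \<ge> 2 ^ d2)"
proof -
  define Tl where "Tl = {b\<in>B. card (V b) = 2 ^ d1}"
  have kT: "k = card Tl" unfolding kdef Tl_def ..
  have TB: "Tl \<subseteq> B" unfolding Tl_def by auto
  have fT: "finite Tl" using finite_subset[OF TB finB] .
  have k1: "k \<ge> 1" using ne fT unfolding kT Tl_def by (metis (mono_tags, lifting) One_nat_def Suc_leI card_gt_0_iff empty_iff mem_Collect_eq)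
  have Vv: "V b \<subseteq> vecs n" "vzero \<in> V b" if "b \<in> B" for b
    using sub that unfolding subgrp_def by auto
  define cond where "cond b u = (\<forall>x\<in>V b. \<not> dotp n u x)" for b u
  define t where "t u = card {b\<in>Tl. cond b u}" for u
  have indT: "ind n (V b) u = 2 ^ d1 * of_bool (cond b u)" if "b \<in> Tl" for b u
    using ind_subgrp[of n "V b" u] sub that TB unfolding Tl_def cond_def by auto
  have tsum: "int (t u) * 2 ^ d1 = (\<Sum>b\<in>Tl. ind n (V b) u)" for u
  proof -
    have "(\<Sum>b\<in>Tl. ind n (V b) u) = (\<Sum>b\<in>Tl. 2 ^ d1 * of_bool (cond b u))"
      using indT by (rule sum.cong[OF refl])
    also have "\<dots> = 2 ^ d1 * int (card (Tl \<inter> {b. cond b u}))"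
      using fT by (simp add: sum_distrib_left[symmetric])
    also have "Tl \<inter> {b. cond b u} = {b\<in>Tl. cond b u}" by auto
    finally show ?thesis unfolding t_def by simp
  qed
  have t0: "t vzero = k" unfolding t_def cond_def kT by simp
  have tle: "\<forall>u\<in>vecs n. t u \<le> k" unfolding t_def kT using fT by (auto intro: card_mono)
  have m1: "(\<Sum>u\<in>vecs n. int (t u)) * 2 ^ d1 = int k * int (2 ^ n)"
  proof -
    have "(\<Sum>u\<in>vecs n. int (t u)) * 2 ^ d1 = (\<Sum>u\<in>vecs n. \<Sum>b\<in>Tl. ind n (V b) u)"
      unfolding sum_distrib_right tsum ..
    also have "\<dots> = (\<Sum>b\<in>Tl. \<Sum>u\<in>vecs n. ind n (V b) u)" by (rule sum.swap)
    also have "\<dots> = (\<Sum>b\<in>Tl. 2 ^ n)"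
      using Vv TB by (intro sum.cong refl) (auto simp: single_sum)
    finally show ?thesis unfolding kT by simp
  qed
  have inter: "V b \<inter> V b' = {vzero}" if b: "b \<in> B" and b': "b' \<in> B" and bb: "b \<noteq> b'" for b b'
  proof (rule ccontr)
    assume "V b \<inter> V b' \<noteq> {vzero}"
    then obtain x where x: "x \<in> V b" "x \<in> V b'" "x \<noteq> vzero" using Vv b b' by blast
    have xv: "x \<in> vecs n" using x Vv b by auto
    have "{b, b'} \<subseteq> {c\<in>B. x \<in> V c}" using x b b' by auto
    then have "card {b, b'} \<le> card {c\<in>B. x \<in> V c}" using finB by (intro card_mono) auto
    then show False using part xv x bb by simp
  qed
  have m2: "(\<Sum>u\<in>vecs n. int (t u) ^ 2) * 2 ^ (2 * d1) = int (2 ^ n) * int k * (2 ^ d1 + int k - 1)"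
  proof -
    have "(\<Sum>u\<in>vecs n. int (t u) ^ 2) * 2 ^ (2 * d1) = (\<Sum>u\<in>vecs n. (int (t u) * 2 ^ d1) ^ 2)"
    proof -
      have e: "(2::int) ^ (2 * d1) = (2 ^ d1) ^ 2" by (simp add: power_mult[symmetric] mult.commute)
      show ?thesis unfolding e sum_distrib_right power_mult_distrib ..
    qed
    also have "\<dots> = (\<Sum>u\<in>vecs n. \<Sum>b\<in>Tl. \<Sum>b'\<in>Tl. ind n (V b) u * ind n (V b') u)"
      unfolding tsum power2_eq_square sum_product ..
    also have "\<dots> = (\<Sum>b\<in>Tl. \<Sum>u\<in>vecs n. \<Sum>b'\<in>Tl. ind n (V b) u * ind n (V b') u)" by (rule sum.swap)
    also have "\<dots> = (\<Sum>b\<in>Tl. \<Sum>b'\<in>Tl. \<Sum>u\<in>vecs n. ind n (V b) u * ind n (V b') u)"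
      by (rule sum.cong[OF refl], rule sum.swap)
    also have "\<dots> = (\<Sum>b\<in>Tl. \<Sum>b'\<in>Tl. 2 ^ n * (1 + (if b = b' then 2 ^ d1 - 1 else 0)))"
    proof (rule sum.cong[OF refl], rule sum.cong[OF refl])
      fix b b' assume b: "b \<in> Tl" and b': "b' \<in> Tl"
      have "(\<Sum>u\<in>vecs n. ind n (V b) u * ind n (V b') u) = 2 ^ n * int (card (V b \<inter> V b'))"
        using Vv b b' TB by (intro pair_sum) auto
      also have "int (card (V b \<inter> V b')) = 1 + (if b = b' then 2 ^ d1 - 1 else 0)"
        using inter[of b b'] b b' TB unfolding Tl_def by auto
      finally show "(\<Sum>u\<in>vecs n. ind n (V b) u * ind n (V b') u) = 2 ^ n * (1 + (if b = b' then 2 ^ d1 - 1 else 0))" .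
    qed
    also have "\<dots> = (\<Sum>b\<in>Tl. 2 ^ n * (int k + (2 ^ d1 - 1)))"
    proof (rule sum.cong[OF refl])
      fix b assume b: "b \<in> Tl"
      have "(\<Sum>b'\<in>Tl. (2::int) ^ n * (1 + (if b = b' then 2 ^ d1 - 1 else 0)))
          = 2 ^ n * ((\<Sum>b'\<in>Tl. 1) + (\<Sum>b'\<in>Tl. if b = b' then 2 ^ d1 - 1 else 0))"
        by (simp add: sum_distrib_left[symmetric] sum.distrib)
      also have "\<dots> = 2 ^ n * (int k + (2 ^ d1 - 1))" using b fT unfolding kT by (simp add: sum.delta)
      finally show "(\<Sum>b'\<in>Tl. (2::int) ^ n * (1 + (if b = b' then 2 ^ d1 - 1 else 0))) = 2 ^ n * (int k + (2 ^ d1 - 1))" .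
    qed
    also have "\<dots> = int (2 ^ n) * int k * (2 ^ d1 + int k - 1)" unfolding kT by (simp add: algebra_simps)
    finally show ?thesis .
  qed
  define r where "r b u = (if b \<in> Tl then ind n (V b) u else if card (V b) = 1 then 1 else 0)" for b u
  have rdvd: "(2::int) ^ d2 dvd ind n (V b) u - r b u" if b: "b \<in> B" for b u
  proof (cases "b \<in> Tl")
    case True then show ?thesis unfolding r_def by simp
  next
    case nT: False
    show ?thesis
    proof (cases "card (V b) = 1")
      case True
      then have "V b = {vzero}" using Vv[OF b] by (metis card_1_singletonE singletonD)
      then show ?thesis unfolding r_def ind_def using nT True by (simp add: sg_def)
    next
      case False
      then have "2 ^ d2 dvd card (V b)" using cls b nT unfolding Tl_def by auto
      then have "(2::int) ^ d2 dvd int (card (V b))" by (metis of_nat_dvd_iff of_nat_numeral of_nat_power)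
      then show ?thesis unfolding r_def using nT False ind_subgrp[of n "V b" u] sub b by auto
    qed
  qed
  have cong: "\<forall>u\<in>vecs n. (2::int) ^ (d2 - d1) dvd (int (t u) - int k)"
  proof
    fix u assume u: "u \<in> vecs n"
    define a where "a w = (\<Sum>b\<in>B. ind n (V b) w)" for w
    define rr where "rr w = (\<Sum>b\<in>B. r b w)" for w
    have h1: "(2::int) ^ d2 dvd a w - rr w" for w
      unfolding a_def rr_def sum_subtractf[symmetric] using rdvd by (intro dvd_sum) auto
    have "a u - a vzero = (if u = vzero then 2 ^ n else 0) - 2 ^ n"
      unfolding a_def using part_sum[OF finB sub part u] part_sum[OF finB sub part vecs_zero] by simp
    moreover have "(2::int) ^ d2 dvd 2 ^ n" using d2n by (simp add: le_imp_power_dvd)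
    ultimately have h3: "(2::int) ^ d2 dvd a u - a vzero" by auto
    have "rr u - rr vzero = (\<Sum>b\<in>B. r b u - r b vzero)" unfolding rr_def sum_subtractf ..
    also have "\<dots> = (\<Sum>b\<in>B. if b \<in> Tl then ind n (V b) u - ind n (V b) vzero else 0)"
      unfolding r_def by (intro sum.cong refl) auto
    also have "\<dots> = (\<Sum>b\<in>Tl. ind n (V b) u - ind n (V b) vzero)"
      using sum.inter_filter[OF finB, of "\<lambda>b. ind n (V b) u - ind n (V b) vzero" "\<lambda>b. b \<in> Tl"] TB
      by (simp add: Int_absorb1 Collect_mem_eq[of B] Int_def[symmetric] conj_commute)
    also have "\<dots> = int (t u) * 2 ^ d1 - int k * 2 ^ d1"
      unfolding sum_subtractf tsum[symmetric] t0 ..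
    finally have rr: "rr u - rr vzero = 2 ^ d1 * (int (t u) - int k)" by (simp add: algebra_simps)
    have "rr u - rr vzero = (a u - a vzero) - (a u - rr u) + (a vzero - rr vzero)" by simp
    then have "(2::int) ^ d2 dvd rr u - rr vzero" using h1 h3 by (metis dvd_add dvd_diff)
    then have "(2::int) ^ d1 * 2 ^ (d2 - d1) dvd 2 ^ d1 * (int (t u) - int k)"
      unfolding rr using d12 by (simp add: power_add[symmetric])
    then show "(2::int) ^ (d2 - d1) dvd (int (t u) - int k)" by simp
  qed
  show ?thesis
    by (rule heden_arith[OF finite_vecs card_vecs vecs_zero t0 tle cong m1 m2 d1 d12 k1])
qed



lemma Psq: "(2 powr ((real n + real d) / 2))^2 = (2::real) ^ (n + d)"
proof -
  have "(2 powr ((real n + real d) / 2))^2 = 2 powr ((real n + real d) / 2 + (real n + real d) / 2)"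
    unfolding power2_eq_square powr_add ..
  also have "(real n + real d) / 2 + (real n + real d) / 2 = real (n + d)" by simp
  also have "2 powr real (n + d) = (2::real) ^ (n + d)" by (rule powr_realpow) simp
  finally show ?thesis .
qed

lemma cmp_sq:
  fixes a :: real and c :: nat
  assumes a0: "a \<ge> 0" and asq: "a^2 = 2 ^ n * real c"
  shows "(a = 2 powr ((real n + real d) / 2) \<longleftrightarrow> c = 2 ^ d)"
    and "(2 powr ((real n + real d) / 2) \<le> a \<longleftrightarrow> 2 ^ d \<le> c)"
    and "(a < 2 powr ((real n + real d) / 2) \<longleftrightarrow> c < 2 ^ d)"
proof -
  define P where "P = 2 powr ((real n + real d) / 2)"
  have P0: "P \<ge> 0" unfolding P_def by simp
  have P2: "P^2 = 2 ^ n * 2 ^ d" unfolding P_def Psq power_add ..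
  have pos: "(2::real) ^ n > 0" by simp
  have "a = P \<longleftrightarrow> a^2 = P^2" using a0 P0 by (metis power2_eq_iff_nonneg)
  also have "\<dots> \<longleftrightarrow> real c = 2 ^ d" unfolding asq P2 using pos by simp
  also have "\<dots> \<longleftrightarrow> c = 2 ^ d" by (metis of_nat_eq_iff of_nat_numeral of_nat_power)
  finally show "(a = 2 powr ((real n + real d) / 2) \<longleftrightarrow> c = 2 ^ d)" unfolding P_def .
  have "P \<le> a \<longleftrightarrow> P^2 \<le> a^2" using a0 P0 by (metis abs_le_square_iff abs_of_nonneg)
  also have "\<dots> \<longleftrightarrow> 2 ^ d \<le> real c" unfolding asq P2 using pos by simp
  also have "\<dots> \<longleftrightarrow> 2 ^ d \<le> c" by (metis of_nat_le_iff of_nat_numeral of_nat_power)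
  finally have le: "P \<le> a \<longleftrightarrow> 2 ^ d \<le> c" .
  then show "(2 powr ((real n + real d) / 2) \<le> a \<longleftrightarrow> 2 ^ d \<le> c)" unfolding P_def .
  show "(a < 2 powr ((real n + real d) / 2) \<longleftrightarrow> c < 2 ^ d)" unfolding P_def[symmetric] using le by linarith
qed

theorem mainTheorem7:
  fixes n d1 d2 k :: nat and F :: "(nat \<Rightarrow> bool) \<Rightarrow> (nat \<Rightarrow> bool)"
  assumes "even n"
    and "\<forall>x \<in> vecs n. F x \<in> vecs n"
    and "is_quadratic n F"
    and "is_APN n F"
    and "2 powr ((real n + real d1) / 2) \<in> nonbent_amplitudes n F"
    and "\<forall>t \<in> nonbent_amplitudes n F. 2 powr ((real n + real d1) / 2) \<le> t"
    and "2 powr ((real n + real d2) / 2) \<in> nonbent_amplitudes n F"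
    and "2 powr ((real n + real d1) / 2) < 2 powr ((real n + real d2) / 2)"
    and "\<forall>t \<in> nonbent_amplitudes n F. 2 powr ((real n + real d1) / 2) < t
           \<longrightarrow> 2 powr ((real n + real d2) / 2) \<le> t"
    and "k = card {b \<in> vecs n. b \<noteq> vzero \<and>
                   amplitude n F b = 2 powr ((real n + real d1) / 2)}"
  shows "(\<not> 2 ^ (d2 - d1) dvd k \<and> d2 < 2 * d1 \<longrightarrow> k \<ge> 2 ^ d1 + 1)
       \<and> (\<not> 2 ^ (d2 - d1) dvd k \<and> d2 \<ge> 2 * d1 \<longrightarrow>
            (d1 dvd d2 \<and> k = (2 ^ d2 - 1) div (2 ^ d1 - 1)) \<or> k > 2 * 2 ^ (d2 - d1))
       \<and> (2 ^ (d2 - d1) dvd k \<and> d2 \<le> 2 * d1 \<longrightarrow> k \<ge> 2 ^ d2 - 2 ^ d1 + 2 ^ (d2 - d1))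
       \<and> (2 ^ (d2 - d1) dvd k \<and> d2 \<ge> 2 * d1 \<longrightarrow> k \<ge> 2 ^ d2)"
proof -
  note q = assms(3)
  define B where "B = {b \<in> vecs n. b \<noteq> vzero}"
  define V where "V = rad n F"
  define A1 where "A1 = 2 powr ((real n + real d1) / 2)"
  define A2 where "A2 = 2 powr ((real n + real d2) / 2)"
  have AS0: "amplitude n F b \<ge> 0" and AS2: "(amplitude n F b)^2 = 2 ^ n * real (card (rad n F b))"
    if "b \<in> vecs n" for b using amp_sq[OF q that] by auto
  have eqd: "amplitude n F b = 2 powr ((real n + real d) / 2) \<longleftrightarrow> card (rad n F b) = 2 ^ d"
    if "b \<in> vecs n" for b d using cmp_sq(1)[OF AS0[OF that] AS2[OF that]] .
  have led: "2 powr ((real n + real d) / 2) \<le> amplitude n F b \<longleftrightarrow> 2 ^ d \<le> card (rad n F b)"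
    if "b \<in> vecs n" for b d using cmp_sq(2)[OF AS0[OF that] AS2[OF that]] .
  have ltd: "amplitude n F b < 2 powr ((real n + real d) / 2) \<longleftrightarrow> card (rad n F b) < 2 ^ d"
    if "b \<in> vecs n" for b d using cmp_sq(3)[OF AS0[OF that] AS2[OF that]] .
  have bent: "amplitude n F b = 2 powr (real n / 2) \<longleftrightarrow> card (rad n F b) = 1"
    if "b \<in> vecs n" for b using eqd[OF that, of 0] by simp
  have "\<exists>b. A1 = amplitude n F b \<and> b \<in> vecs n \<and> b \<noteq> vzero \<and> amplitude n F b \<noteq> 2 powr (real n / 2)"
    using assms(5) unfolding nonbent_amplitudes_def A1_def by (simp only: mem_Collect_eq)
  then obtain b1 where b1: "b1 \<in> vecs n" "b1 \<noteq> vzero" "amplitude n F b1 = A1" "amplitude n F b1 \<noteq> 2 powr (real n / 2)"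
    by (elim exE conjE) simp
  have cb1: "card (rad n F b1) = 2 ^ d1" using b1(3) eqd[OF b1(1)] unfolding A1_def by simp
  have "card (rad n F b1) \<noteq> 1" using b1(4) bent[OF b1(1)] by simp
  then have d1: "d1 \<ge> 1" using cb1 by (cases d1) auto
  have "\<exists>b. A2 = amplitude n F b \<and> b \<in> vecs n \<and> b \<noteq> vzero \<and> amplitude n F b \<noteq> 2 powr (real n / 2)"
    using assms(7) unfolding nonbent_amplitudes_def A2_def by (simp only: mem_Collect_eq)
  then obtain b2 where b2: "b2 \<in> vecs n" "amplitude n F b2 = A2"
    by (elim exE conjE) simp
  have cb2: "card (rad n F b2) = 2 ^ d2" using b2(2) eqd[OF b2(1)] unfolding A2_def by simp
  have "rad n F b2 \<subseteq> vecs n" unfolding rad_def by auto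
  then have "card (rad n F b2) \<le> card (vecs n)" by (intro card_mono) auto
  then have "(2::nat) ^ d2 \<le> 2 ^ n" using cb2 card_vecs by simp
  then have d2n: "d2 \<le> n" by simp
  have "amplitude n F b1 < A2" using assms(8) b1(3) unfolding A1_def A2_def by simp
  then have "card (rad n F b1) < 2 ^ d2" using ltd[OF b1(1)] unfolding A2_def by simp
  then have "(2::nat) ^ d1 < 2 ^ d2" using cb1 by simp
  then have d12: "d1 < d2" by simp
  have cls: "\<forall>b\<in>B. card (V b) = 1 \<or> card (V b) = 2 ^ d1 \<or> 2 ^ d2 dvd card (V b)"
  proof
    fix b assume b: "b \<in> B"
    then have bv: "b \<in> vecs n" and b0: "b \<noteq> vzero" unfolding B_def by auto
    obtain e where e: "card (rad n F b) = 2 ^ e" using subgrp_pow2[OF rad_subgrp[OF q bv]] by blast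
    show "card (V b) = 1 \<or> card (V b) = 2 ^ d1 \<or> 2 ^ d2 dvd card (V b)"
    proof (cases "card (V b) = 1 \<or> card (V b) = 2 ^ d1")
      case True then show ?thesis by blast
    next
      case False
      then have nb: "amplitude n F b \<noteq> 2 powr (real n / 2)" using bent[OF bv] unfolding V_def by simp
      have na: "amplitude n F b \<noteq> A1" using False eqd[OF bv] unfolding V_def A1_def by simp
      have mem: "amplitude n F b \<in> nonbent_amplitudes n F"
        unfolding nonbent_amplitudes_def mem_Collect_eq using bv b0 nb by (intro exI[of _ b]) simp
      then have "A1 \<le> amplitude n F b" using assms(6) unfolding A1_def by blast
      then have "A1 < amplitude n F b" using na by simp
      then have "A2 \<le> amplitude n F b" using assms(9) mem unfolding A1_def A2_def by blast
      then have "2 ^ d2 \<le> card (rad n F b)" using led[OF bv] unfolding A2_def by simp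
      then have "(2::nat) ^ d2 \<le> 2 ^ e" using e by simp
      then have "d2 \<le> e" by simp
      then have "(2::nat) ^ d2 dvd 2 ^ e" by (rule le_imp_power_dvd)
      then show ?thesis unfolding V_def e by blast
    qed
  qed
  have finB: "finite B" unfolding B_def by simp
  have sub: "\<forall>b\<in>B. subgrp n (V b)" unfolding B_def V_def using rad_subgrp[OF q] by blast
  have part: "\<forall>x\<in>vecs n. x \<noteq> vzero \<longrightarrow> card {b\<in>B. x \<in> V b} = 1"
  proof (intro ballI impI)
    fix x assume x: "x \<in> vecs n" "x \<noteq> vzero"
    have "{b\<in>B. x \<in> V b} = {b \<in> vecs n. b \<noteq> vzero \<and> x \<in> rad n F b}" unfolding B_def V_def by auto
    then show "card {b\<in>B. x \<in> V b} = 1" using partition[OF assms(2) q assms(4) x] by simp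
  qed
  have ne: "\<exists>b\<in>B. card (V b) = 2 ^ d1" using b1 cb1 unfolding B_def V_def by blast
  have kdef: "k = card {b\<in>B. card (V b) = 2 ^ d1}"
  proof -
    have "{b \<in> vecs n. b \<noteq> vzero \<and> amplitude n F b = 2 powr ((real n + real d1) / 2)} = {b\<in>B. card (V b) = 2 ^ d1}"
      unfolding B_def V_def using eqd by auto
    then show ?thesis using assms(10) by simp
  qed
  show ?thesis by (rule heden_struct[OF finB sub part cls d1 d12 d2n ne kdef])
qed

end
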